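(* Let $G=(V,E)$ be a temporal network, let $\pi$ be an ordering of $V$, and let $\delta\ge 0$. Let $e=(v,u,t)\in E$ be a temporal edge with $\pi(u)<\pi(v)$, and let $w\in N^{+}_{\pi}(u)$ be a vertex adjacent to $v$ in $G_S$. Put $L_2=E_{v,w}$ and $L_3=E_{u,w}$. Let $L_{12}[e]$ be the first edge of $L_2$ (in sorted order) whose timestamp is at least $t(e)$, and let $L_{13}[e]$ be the last edge of $L_3$ whose timestamp is at most $t(e)+\delta$. Then $e$ forms at least one $\delta$-temporal triangle with $w$ if and only if $L_{12}[e]$ and $L_{13}[e]$ exist and $$t(e)\le t(L_{12}[e])\le t(L_{13}[e])\le t(e)+\delta.$$
   Context: A temporal network $G=(V,E)$ is a finite multiset of temporal edges $(x,y,t)$ with $x\neq y\in V$ and timestamp $t=t(e)\in\mathbb{R}$; the edge goes from $x$ to $y$, and parallel edges (in both directions) are allowed. For distinct $x,y\in V$, $E_{x,y}$ denotes the list of temporal edges from $x$ to $y$, sorted by increasing timestamp. $G_S$ is the simple undirected graph on $V$ with $\{x,y\}$ an edge iff there is at least one temporal edge between $x$ and $y$; $N(x)$ is the neighbourhood of $x$ in $G_S$. For an ordering $\pi$ of $V$, $N^{+}_{\pi}(x)=\{y\in N(x):\pi(x)<\pi(y)\}$. For $\delta\ge 0$, a temporal edge $e=(a,b,t)$ forms a $\delta$-temporal triangle with a vertex $c$ if there exist temporal edges $(a,c,t_2)$ and $(b,c,t_3)$ in $E$ with $t\le t_2\le t_3\le t+\delta$. *)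

theory Defs
  imports Main "HOL-Library.Multiset" Complex_Main
begin

type_synonym 'v tedge = "'v \<times> 'v \<times> real"

definition src :: "'v tedge \<Rightarrow> 'v" where "src e = fst e"
definition dst :: "'v tedge \<Rightarrow> 'v" where "dst e = fst (snd e)"
definition tstamp :: "'v tedge \<Rightarrow> real" where "tstamp e = snd (snd e)"

definition temporal_network :: "'v set \<Rightarrow> 'v tedge multiset \<Rightarrow> bool" where
  "temporal_network V E \<longleftrightarrow> finite V \<and>
     (\<forall>e \<in># E. src e \<in> V \<and> dst e \<in> V \<and> src e \<noteq> dst e)"

text \<open>E_{x,y}: the list of temporal edges from x to y, sorted by increasing timestamp
  (ties are broken arbitrarily; the list is any such sorting).\<close>
definition edges_between :: "'v tedge multiset \<Rightarrow> 'v \<Rightarrow> 'v \<Rightarrow> 'v tedge list" where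
  "edges_between E x y = (SOME xs. mset xs = filter_mset (\<lambda>e. src e = x \<and> dst e = y) E
                                    \<and> sorted (map tstamp xs))"

definition adj :: "'v tedge multiset \<Rightarrow> 'v \<Rightarrow> 'v \<Rightarrow> bool" where
  "adj E x y \<longleftrightarrow> x \<noteq> y \<and> (\<exists>e \<in># E. (src e = x \<and> dst e = y) \<or> (src e = y \<and> dst e = x))"

definition nbhd :: "'v set \<Rightarrow> 'v tedge multiset \<Rightarrow> 'v \<Rightarrow> 'v set" where
  "nbhd V E x = {y \<in> V. adj E x y}"

definition nbhd_plus :: "'v set \<Rightarrow> 'v tedge multiset \<Rightarrow> ('v \<Rightarrow> nat) \<Rightarrow> 'v \<Rightarrow> 'v set" where
  "nbhd_plus V E \<pi> x = {y \<in> nbhd V E x. \<pi> x < \<pi> y}"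

definition forms_triangle :: "'v tedge multiset \<Rightarrow> real \<Rightarrow> 'v tedge \<Rightarrow> 'v \<Rightarrow> bool" where
  "forms_triangle E \<delta> e c \<longleftrightarrow>
     (\<exists>e2 \<in># E. \<exists>e3 \<in># E. src e2 = src e \<and> dst e2 = c \<and> src e3 = dst e \<and> dst e3 = c \<and>
        tstamp e \<le> tstamp e2 \<and> tstamp e2 \<le> tstamp e3 \<and> tstamp e3 \<le> tstamp e + \<delta>)"

definition first_after :: "'v tedge list \<Rightarrow> real \<Rightarrow> 'v tedge option" where
  "first_after L t = find (\<lambda>e. t \<le> tstamp e) L"

definition last_before :: "'v tedge list \<Rightarrow> real \<Rightarrow> 'v tedge option" where
  "last_before L t = find (\<lambda>e. tstamp e \<le> t) (rev L)"

end

theory Submission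
  imports Defs
begin

lemma find_min: "sorted (map f xs) \<Longrightarrow> find P xs = Some x \<Longrightarrow> y \<in> set xs \<Longrightarrow> P y \<Longrightarrow> f x \<le> (f y::real)"
  by (induction xs) (auto split: if_splits)

lemma find_max: "sorted (map f xs) \<Longrightarrow> find P (rev xs) = Some x \<Longrightarrow> y \<in> set xs \<Longrightarrow> P y \<Longrightarrow> f y \<le> (f x::real)"
  by (induction xs rule: rev_induct) (auto simp: sorted_append split: if_splits)

lemma find_some: "find P xs = Some x \<Longrightarrow> x \<in> set xs \<and> P x"
  by (induction xs) (auto split: if_splits)

lemma find_none: "y \<in> set xs \<Longrightarrow> P y \<Longrightarrow> \<exists>x. find P xs = Some x"
  by (induction xs) auto

lemma eb: "mset (edges_between E x y) = filter_mset (\<lambda>e. src e = x \<and> dst e = y) E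
   \<and> sorted (map tstamp (edges_between E x y))"
proof -
  obtain xs where "mset xs = filter_mset (\<lambda>e. src e = x \<and> dst e = y) E"
    using ex_mset by blast
  hence "mset (sort_key tstamp xs) = filter_mset (\<lambda>e. src e = x \<and> dst e = y) E
      \<and> sorted (map tstamp (sort_key tstamp xs))" by simp
  thus ?thesis unfolding edges_between_def by (rule someI)
qed

lemma eb_set: "e \<in> set (edges_between E x y) \<longleftrightarrow> e \<in># E \<and> src e = x \<and> dst e = y"
proof -
  have "e \<in> set (edges_between E x y) \<longleftrightarrow> e \<in># mset (edges_between E x y)" by simp
  also have "\<dots> \<longleftrightarrow> e \<in># E \<and> src e = x \<and> dst e = y" using eb[of E x y] by simp
  finally show ?thesis .
qed

theorem theorem3p2:
  fixes V :: "'v set" and E :: "'v tedge multiset" and \<pi> :: "'v \<Rightarrow> nat"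
    and \<delta> :: real and v u w :: 'v and t :: real
  assumes "temporal_network V E"
    and "inj_on \<pi> V"
    and "\<delta> \<ge> 0"
    and "(v, u, t) \<in># E"
    and "\<pi> u < \<pi> v"
    and "w \<in> nbhd_plus V E \<pi> u"
    and "adj E v w"
  shows "forms_triangle E \<delta> (v, u, t) w \<longleftrightarrow>
    (\<exists>e12 e13. first_after (edges_between E v w) t = Some e12 \<and>
               last_before (edges_between E u w) (t + \<delta>) = Some e13 \<and>
               t \<le> tstamp e12 \<and> tstamp e12 \<le> tstamp e13 \<and> tstamp e13 \<le> t + \<delta>)"
proof -
  have s0: "src (v,u,t) = v" "dst (v,u,t) = u" "tstamp (v,u,t) = t"
    by (simp_all add: src_def dst_def tstamp_def)
  show ?thesis
proof
  assume "forms_triangle E \<delta> (v, u, t) w"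
  then obtain e2 e3 where h: "e2 \<in># E" "e3 \<in># E" "src e2 = v" "dst e2 = w" "src e3 = u" "dst e3 = w"
    "t \<le> tstamp e2" "tstamp e2 \<le> tstamp e3" "tstamp e3 \<le> t + \<delta>"
    unfolding forms_triangle_def s0 by blast
  have i2: "e2 \<in> set (edges_between E v w)" unfolding eb_set using h(1,3,4) by simp
  have i3: "e3 \<in> set (edges_between E u w)" unfolding eb_set using h(2,5,6) by simp
  obtain e12 where e12: "first_after (edges_between E v w) t = Some e12"
    using find_none[OF i2, of "\<lambda>e. t \<le> tstamp e"] h(7) unfolding first_after_def by blast
  obtain e13 where e13: "last_before (edges_between E u w) (t + \<delta>) = Some e13"
    using find_none[of e3 "rev (edges_between E u w)" "\<lambda>e. tstamp e \<le> t + \<delta>"] i3 h(9)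
    unfolding last_before_def set_rev by blast
  have a: "tstamp e12 \<le> tstamp e2"
    using find_min[OF conjunct2[OF eb] e12[unfolded first_after_def] i2] h by simp
  have b: "tstamp e3 \<le> tstamp e13"
    using find_max[OF conjunct2[OF eb] e13[unfolded last_before_def] i3] h by simp
  have c: "t \<le> tstamp e12" using find_some[OF e12[unfolded first_after_def]] by simp
  have d: "tstamp e13 \<le> t + \<delta>" using find_some[OF e13[unfolded last_before_def]] by simp
  show "\<exists>e12 e13. first_after (edges_between E v w) t = Some e12 \<and>
               last_before (edges_between E u w) (t + \<delta>) = Some e13 \<and>
               t \<le> tstamp e12 \<and> tstamp e12 \<le> tstamp e13 \<and> tstamp e13 \<le> t + \<delta>"
  proof (intro exI conjI)
    show "tstamp e12 \<le> tstamp e13" using a b h(8) by linarith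
  qed (use e12 e13 c d in auto)
next
  assume "\<exists>e12 e13. first_after (edges_between E v w) t = Some e12 \<and>
               last_before (edges_between E u w) (t + \<delta>) = Some e13 \<and>
               t \<le> tstamp e12 \<and> tstamp e12 \<le> tstamp e13 \<and> tstamp e13 \<le> t + \<delta>"
  then obtain e12 e13 where h: "first_after (edges_between E v w) t = Some e12"
    "last_before (edges_between E u w) (t + \<delta>) = Some e13"
    "t \<le> tstamp e12" "tstamp e12 \<le> tstamp e13" "tstamp e13 \<le> t + \<delta>" by blast
  have "e12 \<in> set (edges_between E v w)"
    using find_some[OF h(1)[unfolded first_after_def]] by simp
  hence 1: "e12 \<in># E" "src e12 = v" "dst e12 = w" unfolding eb_set by simp_all
  have "e13 \<in> set (edges_between E u w)"
    using find_some[OF h(2)[unfolded last_before_def]] by simp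
  hence 2: "e13 \<in># E" "src e13 = u" "dst e13 = w" unfolding eb_set by simp_all
  show "forms_triangle E \<delta> (v, u, t) w"
    unfolding forms_triangle_def s0 using 1 2 h(3-5) by blast
qed
qed

end
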